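(* Let $G$ be a connected graph on at least two vertices, and let $b(G)$ denote its number of blocks. Then \[ \operatorname{cdim}(G)\geq\frac{b(G)+1}{2}. \]
   Context: All graphs are finite, simple, undirected and nonempty. A block of a graph is a maximal connected subgraph that has no cut vertex of its own (so each block of a connected graph with at least two vertices is either a bridge $K_2$ or a maximal $2$-connected subgraph). For distinct vertices $v,w$, $\kappa(v,w)$ is the maximum number of internally vertex-disjoint $v$–$w$ paths (an edge $vw$ counts as one such path); $\kappa(v,v)=\infty$. For an ordered vertex set $W=(w_1,\ldots,w_k)$, $r_G(v,W)=[\kappa(v,w_1),\ldots,\kappa(v,w_k)]$. $W$ is resolving if $r_G(v_1,W)=r_G(v_2,W)$ implies $v_1=v_2$. The connectivity dimension $\operatorname{cdim}(G)$ is the minimum cardinality of a resolving set. *)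

theory Defs
  imports Complex_Main "HOL-Library.Extended_Nat"
begin

definition simple_graph :: "'a set \<Rightarrow> 'a set set \<Rightarrow> bool" where
  "simple_graph V E \<longleftrightarrow> finite V \<and> V \<noteq> {} \<and>
     (\<forall>e\<in>E. \<exists>u v. e = {u, v} \<and> u \<noteq> v \<and> u \<in> V \<and> v \<in> V)"

definition adj_rel :: "'a set \<Rightarrow> 'a set set \<Rightarrow> ('a \<times> 'a) set" where
  "adj_rel V E = {(x, y). x \<in> V \<and> y \<in> V \<and> {x, y} \<in> E}"

definition connected_graph :: "'a set \<Rightarrow> 'a set set \<Rightarrow> bool" where
  "connected_graph V E \<longleftrightarrow> V \<noteq> {} \<and> (\<forall>u\<in>V. \<forall>v\<in>V. (u, v) \<in> (adj_rel V E)\<^sup>*)"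

definition subgraph :: "'a set \<Rightarrow> 'a set set \<Rightarrow> 'a set \<Rightarrow> 'a set set \<Rightarrow> bool" where
  "subgraph B F V E \<longleftrightarrow> B \<subseteq> V \<and> F \<subseteq> E \<and> (\<forall>e\<in>F. e \<subseteq> B)"

definition del_vertex :: "'a \<Rightarrow> 'a set \<Rightarrow> 'a set set \<Rightarrow> 'a set \<times> 'a set set" where
  "del_vertex x B F = (B - {x}, {e\<in>F. x \<notin> e})"

definition cut_vertex :: "'a set \<Rightarrow> 'a set set \<Rightarrow> 'a \<Rightarrow> bool" where
  "cut_vertex B F x \<longleftrightarrow> x \<in> B \<and> B - {x} \<noteq> {} \<and>
     \<not> connected_graph (B - {x}) {e\<in>F. x \<notin> e}"

definition is_block :: "'a set \<Rightarrow> 'a set set \<Rightarrow> 'a set \<Rightarrow> 'a set set \<Rightarrow> bool" where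
  "is_block V E B F \<longleftrightarrow>
     subgraph B F V E \<and> connected_graph B F \<and> (\<forall>x. \<not> cut_vertex B F x) \<and>
     (\<forall>B' F'. subgraph B' F' V E \<and> connected_graph B' F' \<and> (\<forall>x. \<not> cut_vertex B' F' x)
        \<and> B \<subseteq> B' \<and> F \<subseteq> F' \<longrightarrow> B' = B \<and> F' = F)"

definition num_blocks :: "'a set \<Rightarrow> 'a set set \<Rightarrow> nat" where
  "num_blocks V E = card {(B, F). is_block V E B F}"

definition is_path :: "'a set \<Rightarrow> 'a set set \<Rightarrow> 'a \<Rightarrow> 'a \<Rightarrow> 'a list \<Rightarrow> bool" where
  "is_path V E v w xs \<longleftrightarrow> xs \<noteq> [] \<and> hd xs = v \<and> last xs = w \<and> distinct xs \<and> set xs \<subseteq> V \<and>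
     (\<forall>i. Suc i < length xs \<longrightarrow> {xs ! i, xs ! Suc i} \<in> E)"

definition interior :: "'a list \<Rightarrow> 'a set" where
  "interior xs = set (butlast (tl xs))"

definition kappa :: "'a set \<Rightarrow> 'a set set \<Rightarrow> 'a \<Rightarrow> 'a \<Rightarrow> enat" where
  "kappa V E v w = (if v = w then \<infinity> else
     enat (Max {card P | P. P \<subseteq> {xs. is_path V E v w xs} \<and>
                 pairwise (\<lambda>p q. interior p \<inter> interior q = {}) P}))"

text \<open>W is resolving: vertices are distinguished by their connectivity vectors to W
  (an ordered tuple W is resolving iff its underlying set is).\<close>
definition resolving :: "'a set \<Rightarrow> 'a set set \<Rightarrow> 'a set \<Rightarrow> bool" where
  "resolving V E W \<longleftrightarrow> W \<subseteq> V \<and>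
     (\<forall>v1\<in>V. \<forall>v2\<in>V. (\<forall>w\<in>W. kappa V E v1 w = kappa V E v2 w) \<longrightarrow> v1 = v2)"

definition cdim :: "'a set \<Rightarrow> 'a set set \<Rightarrow> nat" where
  "cdim V E = Min {card W | W. resolving V E W}"

end

theory Submission imports Defs begin

fun pth :: "'a set set \<Rightarrow> 'a list \<Rightarrow> bool" where
  "pth F [] = True"
| "pth F [x] = True"
| "pth F (x # y # xs) = ({x, y} \<in> F \<and> pth F (y # xs))"

fun pedges :: "'a list \<Rightarrow> 'a set set" where
  "pedges [] = {}"
| "pedges [x] = {}"
| "pedges (x # y # xs) = insert {x, y} (pedges (y # xs))"

lemma pth_mono: "pth F xs \<Longrightarrow> F \<subseteq> G \<Longrightarrow> pth G xs"
  by (induction F xs rule: pth.induct) auto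

lemma pth_pedges: "pth (pedges xs) xs"
  by (induction xs rule: pedges.induct) (auto elim: pth_mono)

lemma pth_iff_pedges: "pth F xs \<longleftrightarrow> pedges xs \<subseteq> F"
  by (induction xs rule: pedges.induct) auto

lemma pth_append: "pth F (xs @ ys) \<longleftrightarrow> pth F xs \<and> pth F ys \<and> (xs \<noteq> [] \<longrightarrow> ys \<noteq> [] \<longrightarrow> {last xs, hd ys} \<in> F)"
proof (induction xs rule: pedges.induct)
  case 1 then show ?case by simp
next
  case (2 x) then show ?case by (cases ys) auto
next
  case (3 x y xs) then show ?case by auto
qed

lemma pth_prefix: "pth F (xs @ ys) \<Longrightarrow> pth F xs"
  by (simp add: pth_append)

lemma pth_suffix: "pth F (xs @ ys) \<Longrightarrow> pth F ys"
  by (simp add: pth_append)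

lemma pth_prefix_eq: "pth F zs \<Longrightarrow> zs = xs @ ys \<Longrightarrow> pth F xs"
  by (simp add: pth_append)

lemma pth_suffix_eq: "pth F zs \<Longrightarrow> zs = xs @ ys \<Longrightarrow> pth F ys"
  by (simp add: pth_append)

lemma pth_rev: "pth F (rev xs) = pth F xs"
proof (induction xs rule: pedges.induct)
  case (3 x y xs) then show ?case by (auto simp: pth_append insert_commute)
qed auto

lemma pth_Cons: "pth F (x # xs) \<longleftrightarrow> pth F xs \<and> (xs \<noteq> [] \<longrightarrow> {x, hd xs} \<in> F)"
  by (cases xs) auto

lemma pth_nth: "pth F xs \<longleftrightarrow> (\<forall>i. Suc i < length xs \<longrightarrow> {xs ! i, xs ! Suc i} \<in> F)"
proof (induction xs rule: pedges.induct)
  case (3 x y xs)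
  show ?case
  proof
    assume "pth F (x # y # xs)"
    then show "\<forall>i. Suc i < length (x # y # xs) \<longrightarrow> {(x # y # xs) ! i, (x # y # xs) ! Suc i} \<in> F"
      using 3 by (auto simp: nth_Cons split: nat.splits)
  next
    assume H: "\<forall>i. Suc i < length (x # y # xs) \<longrightarrow> {(x # y # xs) ! i, (x # y # xs) ! Suc i} \<in> F"
    have "{x,y} \<in> F" using H[rule_format, of 0] by simp
    moreover have "\<forall>i. Suc i < length (y # xs) \<longrightarrow> {(y # xs) ! i, (y # xs) ! Suc i} \<in> F"
      using H[rule_format, of "Suc _"] by auto
    ultimately show "pth F (x # y # xs)" using 3 by auto
  qed
qed auto

lemma pth_filter: "pth F xs \<Longrightarrow> z \<notin> set xs \<Longrightarrow> pth {e\<in>F. z \<notin> e} xs"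
  by (induction F xs rule: pth.induct) auto

lemma adj_rel_mono: "S \<subseteq> S' \<Longrightarrow> F \<subseteq> F' \<Longrightarrow> adj_rel S F \<subseteq> adj_rel S' F'"
  unfolding adj_rel_def by auto

lemma rt_adj_mono: "(u,v) \<in> (adj_rel S F)\<^sup>* \<Longrightarrow> S \<subseteq> S' \<Longrightarrow> F \<subseteq> F' \<Longrightarrow> (u,v) \<in> (adj_rel S' F')\<^sup>*"
  using rtrancl_mono[OF adj_rel_mono] by blast

lemma sym_adj: "sym (adj_rel S F)"
  unfolding adj_rel_def sym_def by (auto simp: insert_commute)

lemma rt_adj_sym: "(u,v) \<in> (adj_rel S F)\<^sup>* \<Longrightarrow> (v,u) \<in> (adj_rel S F)\<^sup>*"
  by (meson sym_adj sym_rtrancl symD)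

lemma adj_in: "(u,v) \<in> adj_rel S F \<longleftrightarrow> u \<in> S \<and> v \<in> S \<and> {u,v} \<in> F"
  unfolding adj_rel_def by auto

lemma pth_reach: "pth F xs \<Longrightarrow> set xs \<subseteq> S \<Longrightarrow> xs \<noteq> [] \<Longrightarrow> (hd xs, last xs) \<in> (adj_rel S F)\<^sup>*"
proof (induction F xs rule: pth.induct)
  case (3 F x y xs)
  then have "(y, last (y#xs)) \<in> (adj_rel S F)\<^sup>*" by auto
  moreover have "(x,y) \<in> adj_rel S F" using 3 by (auto simp: adj_in)
  ultimately show ?case by (auto intro: converse_rtrancl_into_rtrancl)
qed auto

lemma conn_from:
  assumes "s \<in> S" "\<forall>v\<in>S. (s,v) \<in> (adj_rel S F)\<^sup>*"
  shows "connected_graph S F"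
  unfolding connected_graph_def using assms
  by (meson empty_iff rt_adj_sym rtrancl_trans)

lemma connD: "connected_graph S F \<Longrightarrow> u \<in> S \<Longrightarrow> v \<in> S \<Longrightarrow> (u,v) \<in> (adj_rel S F)\<^sup>*"
  unfolding connected_graph_def by auto

lemma walk_to_path:
  assumes "(u,v) \<in> (adj_rel S F)\<^sup>*" "u \<in> S"
  shows "\<exists>xs. xs \<noteq> [] \<and> hd xs = u \<and> last xs = v \<and> distinct xs \<and> set xs \<subseteq> S \<and> pth F xs"
  using assms(1)
proof (induction rule: rtrancl_induct)
  case base
  then show ?case using assms(2) by (intro exI[of _ "[u]"]) auto
next
  case (step z z')
  then obtain xs where xs: "xs \<noteq> []" "hd xs = u" "last xs = z" "distinct xs" "set xs \<subseteq> S" "pth F xs" by blast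
  show ?case
  proof (cases "z' \<in> set xs")
    case True
    then obtain l1 l2 where sp: "xs = l1 @ z' # l2" by (meson split_list)
    show ?thesis
      apply (rule exI[of _ "l1 @ [z']"])
      using xs sp by (auto simp: pth_append hd_append split: if_splits)
  next
    case False
    show ?thesis
      apply (rule exI[of _ "xs @ [z']"])
      using xs False step(2) by (auto simp: pth_append adj_in hd_append)
  qed
qed


lemma nocut_conn:
  assumes "\<forall>z. \<not> cut_vertex B F z" "connected_graph B F" "B - {z} \<noteq> {}"
  shows "connected_graph (B - {z}) {e\<in>F. z \<notin> e}"
proof (cases "z \<in> B")
  case True then show ?thesis using assms unfolding cut_vertex_def by blast
next
  case False
  have "adj_rel (B - {z}) {e\<in>F. z \<notin> e} = adj_rel B F" using False unfolding adj_rel_def by auto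
  then show ?thesis using assms(2) False unfolding connected_graph_def by simp
qed

lemma ear:
  assumes conn: "connected_graph B F" and nc: "\<forall>z. \<not> cut_vertex B F z"
  and ab: "a \<in> B" "b \<in> B" "a \<noteq> b"
  and q: "q \<noteq> []" "hd q = a" "last q = b" "distinct q" "set q \<inter> B \<subseteq> {a,b}"
  shows "connected_graph (B \<union> set q) (F \<union> pedges q) \<and> (\<forall>z. \<not> cut_vertex (B \<union> set q) (F \<union> pedges q) z)"
proof
  have pq: "pth (F \<union> pedges q) q" using pth_pedges pth_mono by blast
  show "connected_graph (B \<union> set q) (F \<union> pedges q)"
  proof (rule conn_from[of a])
    show "a \<in> B \<union> set q" using ab by simp
    show "\<forall>v\<in>B \<union> set q. (a, v) \<in> (adj_rel (B \<union> set q) (F \<union> pedges q))\<^sup>*"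
    proof
      fix v assume v: "v \<in> B \<union> set q"
      show "(a, v) \<in> (adj_rel (B \<union> set q) (F \<union> pedges q))\<^sup>*"
      proof (cases "v \<in> B")
        case True
        show ?thesis by (rule rt_adj_mono[OF connD[OF conn ab(1) True]]) auto
      next
        case False
        then have "v \<in> set q" using v by blast
        then obtain l1 l2 where sp: "q = l1 @ v # l2" by (meson split_list)
        have p1: "pth (F \<union> pedges q) (l1 @ [v])" by (rule pth_prefix_eq[OF pq]) (simp add: sp)
        have "hd (l1 @ [v]) = a" using q(2) sp by (cases l1) auto
        moreover have sub: "set (l1 @ [v]) \<subseteq> B \<union> set q" using sp by auto
        moreover have "(hd (l1 @ [v]), last (l1 @ [v])) \<in> (adj_rel (B \<union> set q) (F \<union> pedges q))\<^sup>*" by (rule pth_reach[OF p1 sub]) simp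
        ultimately show ?thesis by simp
      qed
    qed
  qed
  show "\<forall>z. \<not> cut_vertex (B \<union> set q) (F \<union> pedges q) z"
  proof (intro allI notI)
    fix z assume cv: "cut_vertex (B \<union> set q) (F \<union> pedges q) z"
    define S where "S = B \<union> set q - {z}"
    define G where "G = {e \<in> F \<union> pedges q. z \<notin> e}"
    have ne: "B - {z} \<noteq> {}" using ab by blast
    have c1: "connected_graph (B - {z}) {e\<in>F. z \<notin> e}" using nocut_conn[OF nc conn ne] .
    have r1: "(u, v) \<in> (adj_rel S G)\<^sup>*" if "u \<in> B - {z}" "v \<in> B - {z}" for u v
      by (rule rt_adj_mono[OF connD[OF c1 that]]) (auto simp: S_def G_def)
    have pqG: "pth (F \<union> pedges q) q" using pth_pedges pth_mono by blast
    have r2: "\<exists>e\<in>{a,b} - {z}. (e, v) \<in> (adj_rel S G)\<^sup>*" if "v \<in> set q" "v \<noteq> z" for v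
    proof -
      obtain l1 l2 where sp: "q = l1 @ v # l2" using \<open>v \<in> set q\<close> by (meson split_list)
      show ?thesis
      proof (cases "z \<in> set (l1 @ [v])")
        case False
        have "pth (F \<union> pedges q) (l1 @ [v])" by (rule pth_prefix_eq[OF pqG]) (simp add: sp)
        then have p1: "pth G (l1 @ [v])" unfolding G_def
          using pth_filter[OF _ False] by blast
        have h: "hd (l1 @ [v]) = a" using q(2) sp by (cases l1) auto
        have sub: "set (l1 @ [v]) \<subseteq> S" using sp False unfolding S_def by auto
        have "(hd (l1 @ [v]), last (l1 @ [v])) \<in> (adj_rel S G)\<^sup>*" by (rule pth_reach[OF p1 sub]) simp
        then have "(a, v) \<in> (adj_rel S G)\<^sup>*" using h by simp
        moreover have "a \<noteq> z" using h False by (cases l1) auto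
        ultimately show ?thesis by blast
      next
        case True
        then have "z \<in> set l1" using that by auto
        then have zn: "z \<notin> set (v # l2)" using q(4) sp by auto
        have "pth (F \<union> pedges q) (v # l2)" by (rule pth_suffix_eq[OF pqG]) (simp add: sp)
        then have p1: "pth G (v # l2)" unfolding G_def
          using pth_filter[OF _ zn] by blast
        have l: "last (v # l2) = b" using q(3) sp by simp
        have sub: "set (v # l2) \<subseteq> S" using sp zn unfolding S_def by auto
        have "(hd (v # l2), last (v # l2)) \<in> (adj_rel S G)\<^sup>*" by (rule pth_reach[OF p1 sub]) simp
        then have "(v, b) \<in> (adj_rel S G)\<^sup>*" using l by simp
        then have "(b, v) \<in> (adj_rel S G)\<^sup>*" by (rule rt_adj_sym)
        moreover have "b \<noteq> z" using l zn by (metis last_in_set list.distinct(1))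
        ultimately show ?thesis by blast
      qed
    qed
    obtain s where s: "s \<in> B - {z}" using ne by blast
    have "connected_graph S G"
    proof (rule conn_from[of s])
      show "s \<in> S" using s unfolding S_def by blast
      show "\<forall>v\<in>S. (s, v) \<in> (adj_rel S G)\<^sup>*"
      proof
        fix v assume "v \<in> S"
        then consider "v \<in> B - {z}" | "v \<in> set q" "v \<noteq> z" unfolding S_def by blast
        then show "(s, v) \<in> (adj_rel S G)\<^sup>*"
        proof cases
          case 1 then show ?thesis using r1 s by blast
        next
          case 2
          then obtain e where "e \<in> {a,b} - {z}" "(e, v) \<in> (adj_rel S G)\<^sup>*" using r2 by blast
          moreover have "e \<in> B - {z}" using calculation ab by blast
          ultimately show ?thesis using r1[OF s, of e] rtrancl_trans by metis
        qed
      qed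
    qed
    then show False using cv unfolding cut_vertex_def S_def G_def by simp
  qed
qed


lemma k2_ok:
  assumes "u \<noteq> v"
  shows "connected_graph {u,v} {{u,v}} \<and> (\<forall>z. \<not> cut_vertex {u,v} {{u,v}} z)"
proof
  show "connected_graph {u,v} {{u,v}}"
    by (rule conn_from[of u]) (auto simp: adj_in)
  show "\<forall>z. \<not> cut_vertex {u,v} {{u,v}} z"
  proof (intro allI notI)
    fix z assume "cut_vertex {u,v} {{u,v}} z"
    then have "z = u \<or> z = v" "\<not> connected_graph ({u,v} - {z}) {e\<in>{{u,v}}. z \<notin> e}"
      unfolding cut_vertex_def by auto
    moreover have "connected_graph {w} X" for w :: 'a and X
      by (rule conn_from[of w]) auto
    ultimately show False using assms by (auto simp: insert_Diff_if)
  qed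
qed

locale Gr =
  fixes V :: "'a set" and E :: "'a set set"
  assumes sg: "simple_graph V E" and cg: "connected_graph V E" and c2: "card V \<ge> 2"
begin

lemma finV: "finite V" using sg unfolding simple_graph_def by auto

lemma edgeD: "e \<in> E \<Longrightarrow> \<exists>u v. e = {u,v} \<and> u \<noteq> v \<and> u \<in> V \<and> v \<in> V"
  using sg unfolding simple_graph_def by auto

lemma E_sub: "E \<subseteq> Pow V" using edgeD by blast

lemma finE: "finite E" using E_sub finV by (meson finite_Pow_iff finite_subset)

lemma extend_block:
  assumes "subgraph B F V E" "connected_graph B F" "\<forall>x. \<not> cut_vertex B F x"
  shows "\<exists>B' F'. is_block V E B' F' \<and> B \<subseteq> B' \<and> F \<subseteq> F'"
proof -
  define C where "C = {(X,Y). subgraph X Y V E \<and> connected_graph X Y \<and> (\<forall>x. \<not> cut_vertex X Y x) \<and> B \<subseteq> X \<and> F \<subseteq> Y}"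
  have Csub: "C \<subseteq> Pow V \<times> Pow E" unfolding C_def subgraph_def by auto
  have finC: "finite C" by (rule finite_subset[OF Csub]) (simp add: finV finE)
  have inC: "(B,F) \<in> C" using assms unfolding C_def by auto
  define f where "f = (\<lambda>(X::'a set,Y::'a set set). card X + card Y)"
  define m where "m = Max (f ` C)"
  have "m \<in> f ` C" unfolding m_def using finC inC by (intro Max_in) auto
  then obtain X Y where XY: "(X,Y) \<in> C" "f (X,Y) = m" by auto
  have le: "f p \<le> m" if "p \<in> C" for p unfolding m_def using finC that by (intro Max_ge) auto
  have "is_block V E X Y"
    unfolding is_block_def
  proof (intro conjI allI impI)
    show "subgraph X Y V E" "connected_graph X Y" "\<And>x. \<not> cut_vertex X Y x" using XY unfolding C_def by auto
    fix B' F' assume H: "subgraph B' F' V E \<and> connected_graph B' F' \<and> (\<forall>x. \<not> cut_vertex B' F' x) \<and> X \<subseteq> B' \<and> Y \<subseteq> F'"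
    then have "(B',F') \<in> C" using XY unfolding C_def by auto
    then have "f (B',F') \<le> f (X,Y)" using le XY by auto
    moreover have fin: "finite B'" "finite F'" using H finV finE unfolding subgraph_def
      by (auto intro: finite_subset)
    moreover have "card X \<le> card B'" "card Y \<le> card F'" using H fin by (auto intro: card_mono)
    ultimately have "card X = card B'" "card Y = card F'" unfolding f_def by auto
    then show "B' = X" "F' = Y" using H fin by (metis card_subset_eq)+
  qed
  then show ?thesis using XY unfolding C_def by auto
qed

lemma blockD:
  assumes "is_block V E B F"
  shows "subgraph B F V E" "connected_graph B F" "\<forall>x. \<not> cut_vertex B F x"
    "\<And>B' F'. subgraph B' F' V E \<Longrightarrow> connected_graph B' F' \<Longrightarrow> (\<forall>x. \<not> cut_vertex B' F' x)
        \<Longrightarrow> B \<subseteq> B' \<Longrightarrow> F \<subseteq> F' \<Longrightarrow> B' = B \<and> F' = F"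
  using assms unfolding is_block_def by blast+

lemma block_card2:
  assumes "is_block V E B F"
  shows "card B \<ge> 2"
proof (rule ccontr)
  assume "\<not> card B \<ge> 2"
  have fB: "finite B" using blockD(1)[OF assms] finV unfolding subgraph_def by (auto intro: finite_subset)
  have "B \<noteq> {}" using blockD(2)[OF assms] unfolding connected_graph_def by auto
  then have "card B > 0" using fB by (simp add: card_gt_0_iff)
  then have "card B = 1" using \<open>\<not> card B \<ge> 2\<close> by linarith
  then obtain v where vB: "B = {v}" by (rule card_1_singletonE)
  have vV: "v \<in> V" using blockD(1)[OF assms] vB unfolding subgraph_def by auto
  obtain u where uV: "u \<in> V" "u \<noteq> v" using c2 vV
    by (metis card_le_Suc0_iff_eq finV not_less_eq_eq numeral_2_eq_2)
  have "(v,u) \<in> (adj_rel V E)\<^sup>*" using cg vV uV unfolding connected_graph_def by auto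
  then obtain w where w: "(v,w) \<in> adj_rel V E" using uV(2) by (metis converse_rtranclE)
  then have wv: "w \<noteq> v" "w \<in> V" "{v,w} \<in> E" using edgeD by (fastforce simp: adj_in)+
  have F0: "F \<subseteq> {{v,w}}"
  proof
    fix e assume "e \<in> F"
    then have "e \<in> E" "e \<subseteq> {v}" using blockD(1)[OF assms] vB unfolding subgraph_def by auto
    then show "e \<in> {{v,w}}" using edgeD by fastforce
  qed
  have "{v,w} = B \<and> {{v,w}} = F"
    apply (rule blockD(4)[OF assms])
    using k2_ok[of v w] wv vV F0 vB unfolding subgraph_def by auto
  then show False using vB wv by auto
qed

lemma pedges_sub: "e \<in> pedges q \<Longrightarrow> e \<subseteq> set q"
  by (induction q rule: pedges.induct) auto

lemma ear_exist:
  assumes blk: "is_block V E C G" and x: "x \<in> C" and a: "a \<notin> C" "a \<in> V" "{x,a} \<in> E"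
  and walk: "(a,t) \<in> (adj_rel (V - {x}) E)\<^sup>*" and t: "t \<in> C"
  shows False
proof -
  have "(t \<notin> C \<and> (a,t) \<in> (adj_rel (V - C) E)\<^sup>*) \<or>
     (\<exists>y c'. (a,y) \<in> (adj_rel (V - C) E)\<^sup>* \<and> y \<notin> C \<and> c' \<in> C \<and> (y,c') \<in> adj_rel (V - {x}) E)"
    using walk
  proof (induction rule: rtrancl_induct)
    case base then show ?case using a by auto
  next
    case (step z z')
    show ?case
    proof (cases "z \<notin> C \<and> (a,z) \<in> (adj_rel (V - C) E)\<^sup>*")
      case True
      show ?thesis
      proof (cases "z' \<in> C")
        case True2: True
        then show ?thesis using True step(2) by blast
      next
        case False
        then have "(z,z') \<in> adj_rel (V - C) E" using step(2) True by (auto simp: adj_in)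
        then show ?thesis using True False by (meson rtrancl.rtrancl_into_rtrancl)
      qed
    next
      case False
      then show ?thesis using step(3) by blast
    qed
  qed
  then obtain y c' where yc: "(a,y) \<in> (adj_rel (V - C) E)\<^sup>*" "y \<notin> C" "c' \<in> C" "(y,c') \<in> adj_rel (V - {x}) E"
    using t by blast
  have yV: "y \<in> V" "c' \<in> V" "c' \<noteq> x" "{y,c'} \<in> E" using yc(4) by (auto simp: adj_in)
  obtain ys where ys: "ys \<noteq> []" "hd ys = a" "last ys = y" "distinct ys" "set ys \<subseteq> V - C" "pth E ys"
    using walk_to_path[OF yc(1)] a by auto
  define q where "q = x # ys @ [c']"
  have xn: "x \<notin> set ys" "c' \<notin> set ys" using ys(5) x yc(3) by auto
  have q: "q \<noteq> []" "hd q = x" "last q = c'" "distinct q" "set q \<inter> C \<subseteq> {x,c'}"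
    unfolding q_def using ys xn yV by auto
  have pq: "pth E q" unfolding q_def using ys a yV
    by (auto simp: pth_append pth_Cons)
  have sg: "subgraph C G V E" "connected_graph C G" "\<forall>z. \<not> cut_vertex C G z" using blockD[OF blk] by auto
  have e: "connected_graph (C \<union> set q) (G \<union> pedges q) \<and> (\<forall>z. \<not> cut_vertex (C \<union> set q) (G \<union> pedges q) z)"
    by (rule ear[OF sg(2) sg(3) x yc(3) yV(3)[symmetric] q])
  have sub: "subgraph (C \<union> set q) (G \<union> pedges q) V E"
    unfolding subgraph_def
  proof (intro conjI)
    show "C \<union> set q \<subseteq> V" using sg(1) ys(5) x yV unfolding subgraph_def q_def by auto
    show "G \<union> pedges q \<subseteq> E" using sg(1) pq by (auto simp: subgraph_def pth_iff_pedges)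
    show "\<forall>e\<in>G \<union> pedges q. e \<subseteq> C \<union> set q" using sg(1) pedges_sub unfolding subgraph_def by blast
  qed
  have "C \<union> set q = C" using blockD(4)[OF blk sub] e by auto
  moreover have "a \<in> set q" unfolding q_def using ys by (cases ys) auto
  ultimately show False using a by auto
qed

lemma conn_union:
  assumes "connected_graph S1 F1" "connected_graph S2 F2" "s \<in> S1" "s \<in> S2"
  shows "connected_graph (S1 \<union> S2) (F1 \<union> F2)"
proof (rule conn_from[of s])
  show "s \<in> S1 \<union> S2" using assms by auto
  show "\<forall>v\<in>S1 \<union> S2. (s, v) \<in> (adj_rel (S1 \<union> S2) (F1 \<union> F2))\<^sup>*"
  proof
    fix v assume "v \<in> S1 \<union> S2"
    then show "(s, v) \<in> (adj_rel (S1 \<union> S2) (F1 \<union> F2))\<^sup>*"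
    proof
      assume "v \<in> S1"
      show ?thesis by (rule rt_adj_mono[OF connD[OF assms(1) assms(3) \<open>v \<in> S1\<close>]]) auto
    next
      assume "v \<in> S2"
      show ?thesis by (rule rt_adj_mono[OF connD[OF assms(2) assms(4) \<open>v \<in> S2\<close>]]) auto
    qed
  qed
qed

lemma block_union:
  assumes b1: "is_block V E B F" and b2: "is_block V E C G"
  and uv: "u \<in> B" "u \<in> C" "v \<in> B" "v \<in> C" "u \<noteq> v"
  shows "B = C \<and> F = G"
proof -
  note d1 = blockD[OF b1] and d2 = blockD[OF b2]
  have sub: "subgraph (B \<union> C) (F \<union> G) V E" using d1(1) d2(1) unfolding subgraph_def by auto
  have con: "connected_graph (B \<union> C) (F \<union> G)" by (rule conn_union[OF d1(2) d2(2) uv(1,2)])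
  have nc: "\<forall>z. \<not> cut_vertex (B \<union> C) (F \<union> G) z"
  proof (intro allI notI)
    fix z assume cv: "cut_vertex (B \<union> C) (F \<union> G) z"
    have n1: "B - {z} \<noteq> {}" "C - {z} \<noteq> {}" using uv by auto
    have c1: "connected_graph (B - {z}) {e\<in>F. z \<notin> e}" by (rule nocut_conn[OF d1(3) d1(2) n1(1)])
    have c2': "connected_graph (C - {z}) {e\<in>G. z \<notin> e}" by (rule nocut_conn[OF d2(3) d2(2) n1(2)])
    define s where "s = (if z = u then v else u)"
    have s: "s \<in> B - {z}" "s \<in> C - {z}" using uv unfolding s_def by auto
    have "connected_graph ((B - {z}) \<union> (C - {z})) ({e\<in>F. z \<notin> e} \<union> {e\<in>G. z \<notin> e})"
      by (rule conn_union[OF c1 c2' s])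
    moreover have "(B - {z}) \<union> (C - {z}) = B \<union> C - {z}" by auto
    moreover have "{e\<in>F. z \<notin> e} \<union> {e\<in>G. z \<notin> e} = {e\<in>F \<union> G. z \<notin> e}" by auto
    ultimately show False using cv unfolding cut_vertex_def by simp
  qed
  have "B \<union> C = B \<and> F \<union> G = F" by (rule d1(4)[OF sub con nc]) auto
  moreover have "B \<union> C = C \<and> F \<union> G = G" by (rule d2(4)[OF sub con nc]) auto
  ultimately show ?thesis by auto
qed

definition PS :: "'a \<Rightarrow> 'a \<Rightarrow> 'a list set set" where
  "PS x w = {P. P \<subseteq> {xs. is_path V E x w xs} \<and> pairwise (\<lambda>p q. interior p \<inter> interior q = {}) P}"

lemma kappa_eq: "x \<noteq> w \<Longrightarrow> kappa V E x w = enat (Max (card ` PS x w))"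
  unfolding kappa_def PS_def by (simp add: image_def) (metis (no_types, lifting))

lemma path_form:
  assumes "is_path V E x w p" "x \<noteq> w"
  shows "\<exists>m. p = x # m @ [w] \<and> interior p = set m \<and> distinct (x # m @ [w]) \<and> set p \<subseteq> V \<and> pth E p"
proof -
  have p: "p \<noteq> []" "hd p = x" "last p = w" "distinct p" "set p \<subseteq> V"
    using assms(1) unfolding is_path_def by auto
  have pe: "pth E p" using assms(1) unfolding is_path_def pth_nth by auto
  have p1: "p = x # tl p" using p by (cases p) auto
  have "tl p \<noteq> []" using p1 p assms(2) by (metis last_ConsL)
  then have p2: "tl p = butlast (tl p) @ [w]" using p p1 by (metis append_butlast_last_id last_ConsR)
  show ?thesis
    apply (rule exI[of _ "butlast (tl p)"])
    using p1 p2 p pe unfolding interior_def by (metis append_Cons)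
qed

lemma sec_inj:
  assumes "x \<noteq> w" "P \<in> PS x w"
  shows "inj_on (\<lambda>p. p ! 1) P"
proof
  fix p q assume pq: "p \<in> P" "q \<in> P" "p ! 1 = q ! 1"
  have ip: "is_path V E x w p" "is_path V E x w q" using assms(2) pq unfolding PS_def by auto
  obtain mp where mp: "p = x # mp @ [w]" "interior p = set mp" "distinct (x # mp @ [w])"
    using path_form[OF ip(1) assms(1)] by blast
  obtain mq where mq: "q = x # mq @ [w]" "interior q = set mq" "distinct (x # mq @ [w])"
    using path_form[OF ip(2) assms(1)] by blast
  show "p = q"
  proof (rule ccontr)
    assume ne: "p \<noteq> q"
    have "interior p \<inter> interior q = {}" using assms(2) pq(1,2) ne unfolding PS_def pairwise_def by blast
    then have disj: "set mp \<inter> set mq = {}" using mp(2) mq(2) by simp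
    show False
    proof (cases mp)
      case Nil
      then have "q ! 1 = w" using pq mp by simp
      then have "mq = []" using mq by (cases mq) auto
      then show False using ne mp mq Nil by simp
    next
      case (Cons a mp')
      then have "q ! 1 = a" using pq mp by simp
      moreover have "mq \<noteq> []" using ne mp mq Cons \<open>q ! 1 = a\<close> by auto
      ultimately have "a \<in> set mq" using mq by (cases mq) auto
      then show False using disj Cons by auto
    qed
  qed
qed

lemma card_PS_le:
  assumes "x \<noteq> w" "P \<in> PS x w" "\<forall>p\<in>P. p ! 1 \<in> S" "finite S"
  shows "card P \<le> card S"
proof -
  have i: "inj_on (\<lambda>p. p ! 1) P" by (rule sec_inj[OF assms(1,2)])
  have sub: "(\<lambda>p. p ! 1) ` P \<subseteq> S" using assms(3) by auto
  have "finite P" using finite_imageD[OF finite_subset[OF sub assms(4)] i] .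
  then show ?thesis using card_inj_on_le[OF i sub assms(4)] by simp
qed

lemma sec_in:
  assumes "x \<noteq> w" "P \<in> PS x w" "p \<in> P"
  shows "p ! 1 \<in> V - {x}"
proof -
  have "is_path V E x w p" using assms unfolding PS_def by auto
  then obtain m where "p = x # m @ [w]" "distinct (x # m @ [w])" "set p \<subseteq> V"
    using path_form assms(1) by blast
  then show ?thesis by (cases m) auto
qed

lemma PS_empty: "{} \<in> PS x w" unfolding PS_def by auto

lemma kappa_cases:
  assumes "x \<noteq> w"
  shows "\<exists>n. kappa V E x w = enat n \<and> (\<exists>P\<in>PS x w. card P = n) \<and> (\<forall>P\<in>PS x w. card P \<le> n)"
proof -
  have bd: "card P \<le> card (V - {x})" if "P \<in> PS x w" for P
    using card_PS_le[OF assms that] sec_in[OF assms that] finV by auto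
  have fin: "finite (card ` PS x w)"
    by (rule finite_subset[of _ "{..card (V - {x})}"]) (use bd in auto)
  have ne: "card ` PS x w \<noteq> {}" using PS_empty by auto
  show ?thesis
    apply (rule exI[of _ "Max (card ` PS x w)"])
    using kappa_eq[OF assms] Max_in[OF fin ne] Max_ge[OF fin] by auto
qed

lemma kappa_le:
  assumes "x \<noteq> w" "\<forall>P\<in>PS x w. card P \<le> k"
  shows "kappa V E x w \<le> enat k"
  using kappa_cases[OF assms(1)] assms(2) by auto

lemma kappa_ge1:
  assumes "x \<noteq> w" "x \<in> V" "w \<in> V"
  shows "kappa V E x w \<ge> 1"
proof -
  have "(x,w) \<in> (adj_rel V E)\<^sup>*" using cg assms unfolding connected_graph_def by auto
  then obtain xs where xs: "xs \<noteq> []" "hd xs = x" "last xs = w" "distinct xs" "set xs \<subseteq> V" "pth E xs"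
    using walk_to_path[OF _ assms(2)] by blast
  have "is_path V E x w xs" unfolding is_path_def using xs pth_nth by blast
  then have "{xs} \<in> PS x w" unfolding PS_def by auto
  then obtain n where "kappa V E x w = enat n" "card {xs} \<le> n" using kappa_cases[OF assms(1)] by blast
  then show ?thesis by (simp add: one_enat_def)
qed

lemma kappa_ge2:
  assumes "x \<noteq> w" "kappa V E x w \<ge> 2"
  shows "\<exists>P\<in>PS x w. \<exists>p\<in>P. \<exists>q\<in>P. p \<noteq> q"
proof -
  obtain n P where "kappa V E x w = enat n" "P \<in> PS x w" "card P = n" using kappa_cases[OF assms(1)] by blast
  then have "card P \<ge> 2" using assms(2) by (simp add: numeral_eq_enat)
  then show ?thesis using \<open>P \<in> PS x w\<close>
    by (metis One_nat_def card.infinite card_le_Suc0_iff_eq not_less_eq_eq numeral_2_eq_2 zero_le)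
qed

lemma finB: assumes "is_block V E B F" shows "finite B"
  using blockD(1)[OF assms] finV unfolding subgraph_def by (auto intro: finite_subset)

lemma common_block:
  assumes "x \<noteq> w" "P \<in> PS x w" "p \<in> P" "q \<in> P" "p \<noteq> q"
  shows "\<exists>B F. is_block V E B F \<and> x \<in> B \<and> w \<in> B"
proof -
  have ip: "is_path V E x w p" "is_path V E x w q" using assms(2-4) unfolding PS_def by auto
  obtain mp where mp: "p = x # mp @ [w]" "interior p = set mp" "distinct (x # mp @ [w])" "set p \<subseteq> V" "pth E p"
    using path_form[OF ip(1) assms(1)] by blast
  obtain mq where mq: "q = x # mq @ [w]" "interior q = set mq" "distinct (x # mq @ [w])" "set q \<subseteq> V" "pth E q"
    using path_form[OF ip(2) assms(1)] by blast
  have "interior p \<inter> interior q = {}" using assms(2-5) unfolding PS_def pairwise_def by blast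
  then have disj: "set mp \<inter> set mq = {}" using mp(2) mq(2) by simp
  define y where "y = hd (mp @ [w])"
  define ear where "ear = (mp @ [w]) @ (rev mq @ [x])"
  have yin: "y \<in> set (mp @ [w])" unfolding y_def by (cases mp) auto
  have yx: "y \<noteq> x" using yin mp(3) by auto
  have ep: "ear \<noteq> []" "hd ear = y" "last ear = x" "distinct ear" "set ear \<inter> {x,y} \<subseteq> {y,x}"
    unfolding ear_def y_def using mp(3) mq(3) disj assms(1) by (auto simp: hd_append)
  have k: "connected_graph {x,y} {{x,y}}" "\<forall>z. \<not> cut_vertex {x,y} {{x,y}} z" using k2_ok[OF yx[symmetric]] by auto
  have e: "connected_graph ({x,y} \<union> set ear) ({{x,y}} \<union> pedges ear) \<and>
      (\<forall>z. \<not> cut_vertex ({x,y} \<union> set ear) ({{x,y}} \<union> pedges ear) z)"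
    by (rule ear[OF k(1) k(2) _ _ yx ep]) auto
  have p1: "pth E (x # (mp @ [w]))" using mp(1,5) by simp
  then have exy: "{x,y} \<in> E" and pa: "pth E (mp @ [w])" unfolding y_def using pth_Cons by (metis snoc_eq_iff_butlast)+
  have "pth E (rev q)" using mq(5) pth_rev by blast
  then have p2: "pth E (w # (rev mq @ [x]))" using mq(1) by simp
  then have pb: "pth E (rev mq @ [x])" and ej: "{w, hd (rev mq @ [x])} \<in> E" using pth_Cons by (metis snoc_eq_iff_butlast)+
  have pe: "pth E ear" unfolding ear_def
    by (rule iffD2[OF pth_append], intro conjI impI) (use pa pb ej in auto)
  have sub: "subgraph ({x,y} \<union> set ear) ({{x,y}} \<union> pedges ear) V E"
    unfolding subgraph_def
  proof (intro conjI)
    show "{x, y} \<union> set ear \<subseteq> V" using mp(1,4) mq(1,4) yin unfolding ear_def by auto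
    show "{{x, y}} \<union> pedges ear \<subseteq> E" using exy pe by (simp add: pth_iff_pedges)
    show "\<forall>e\<in>{{x, y}} \<union> pedges ear. e \<subseteq> {x, y} \<union> set ear" using pedges_sub by blast
  qed
  obtain B F where "is_block V E B F" "{x,y} \<union> set ear \<subseteq> B"
    using extend_block[OF sub] e by blast
  moreover have "w \<in> set ear" unfolding ear_def by simp
  ultimately show ?thesis by blast
qed

lemma block_sec:
  assumes blk: "is_block V E B F" and xc: "x \<in> B" "c \<in> B" "x \<noteq> c" and ip: "is_path V E x c p"
  shows "p ! 1 \<in> B"
proof (rule ccontr)
  assume nb: "p ! 1 \<notin> B"
  obtain m where m: "p = x # m @ [c]" "distinct (x # m @ [c])" "set p \<subseteq> V" "pth E p"
    using path_form[OF ip xc(3)] by blast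
  have y: "p ! 1 = hd (m @ [c])" using m(1) by (cases m) auto
  have p1: "pth E (x # (m @ [c]))" using m(1,4) by simp
  then have exy: "{x, hd (m @ [c])} \<in> E" and pa: "pth E (m @ [c])" using pth_Cons by (metis snoc_eq_iff_butlast)+
  have sub: "set (m @ [c]) \<subseteq> V - {x}" using m by auto
  have "(hd (m @ [c]), last (m @ [c])) \<in> (adj_rel (V - {x}) E)\<^sup>*" by (rule pth_reach[OF pa sub]) simp
  then have wk: "(p ! 1, c) \<in> (adj_rel (V - {x}) E)\<^sup>*" using y by simp
  have yV: "p ! 1 \<in> V" using sub y by (cases m) auto
  show False by (rule ear_exist[OF blk xc(1) nb yV _ wk xc(2)]) (use exy y in simp)
qed

lemma kappa_block_le:
  assumes blk: "is_block V E B F" and xc: "x \<in> B" "c \<in> B" "x \<noteq> c"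
  shows "kappa V E x c \<le> enat (card B - 1)"
proof (rule kappa_le[OF xc(3)], intro ballI)
  fix P assume P: "P \<in> PS x c"
  have "\<forall>p\<in>P. p ! 1 \<in> B - {x}"
  proof
    fix p assume "p \<in> P"
    then have "is_path V E x c p" using P unfolding PS_def by auto
    then show "p ! 1 \<in> B - {x}" using block_sec[OF blk xc] sec_in[OF xc(3) P \<open>p \<in> P\<close>] by auto
  qed
  then have "card P \<le> card (B - {x})" using card_PS_le[OF xc(3) P] finB[OF blk] by blast
  then show "card P \<le> card B - 1" using xc(1) finB[OF blk] by simp
qed

lemma kappa_not1:
  assumes "x \<noteq> w" "x \<in> V" "w \<in> V" "kappa V E x w \<noteq> 1"
  shows "\<exists>B F. is_block V E B F \<and> x \<in> B \<and> w \<in> B"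
proof -
  obtain n where n: "kappa V E x w = enat n" using kappa_cases[OF assms(1)] by blast
  have "kappa V E x w \<ge> 1" by (rule kappa_ge1[OF assms(1-3)])
  then have "n \<ge> 2" using n assms(4) by (simp add: one_enat_def)
  then have "kappa V E x w \<ge> 2" using n by (simp add: numeral_eq_enat)
  then obtain P p q where "P \<in> PS x w" "p \<in> P" "q \<in> P" "p \<noteq> q" using kappa_ge2[OF assms(1)] by blast
  then show ?thesis using common_block[OF assms(1)] by blast
qed

lemma no_loop: "{x} \<notin> E"
  using edgeD by (metis doubleton_eq_iff insert_absorb2)

end

locale Grr = Gr +
  fixes r assumes rV: "r \<in> V"
begin

definition exitv :: "'a set \<Rightarrow> 'a \<Rightarrow> bool" where
  "exitv B x \<longleftrightarrow> x \<in> B \<and> (\<exists>y. y \<in> V \<and> y \<notin> B \<and> {x,y} \<in> E \<and> (y,r) \<in> (adj_rel (V - B) E)\<^sup>*)"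

definition par :: "'a set \<Rightarrow> 'a" where
  "par B = (if r \<in> B then r else (THE x. exitv B x))"

lemma blockV: "is_block V E B F \<Longrightarrow> B \<subseteq> V"
  using blockD(1) unfolding subgraph_def by blast

lemma exit_exists:
  assumes blk: "is_block V E B F" and r: "r \<notin> B"
  shows "\<exists>x. exitv B x"
proof -
  obtain b where b: "b \<in> B" using blockD(2)[OF blk] unfolding connected_graph_def by auto
  have "(r,b) \<in> (adj_rel V E)\<^sup>*" using cg rV blockV[OF blk] b unfolding connected_graph_def by auto
  then have "(b \<notin> B \<and> (r,b) \<in> (adj_rel (V - B) E)\<^sup>*) \<or> (\<exists>x. exitv B x)"
  proof (induction rule: rtrancl_induct)
    case base then show ?case using r by auto
  next
    case (step z z')
    show ?case
    proof (cases "z \<notin> B \<and> (r,z) \<in> (adj_rel (V - B) E)\<^sup>*")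
      case True
      show ?thesis
      proof (cases "z' \<in> B")
        case True2: True
        have "(z,r) \<in> (adj_rel (V - B) E)\<^sup>*" by (rule rt_adj_sym) (use True in simp)
        moreover have "z \<in> V" "{z',z} \<in> E" using step(2) by (auto simp: adj_in insert_commute)
        ultimately have "exitv B z'" unfolding exitv_def using True True2
          by (intro conjI exI[of _ z]) simp_all
        then show ?thesis by blast
      next
        case False
        then have "(z,z') \<in> adj_rel (V - B) E" using step(2) True by (auto simp: adj_in)
        then show ?thesis using True False by (meson rtrancl.rtrancl_into_rtrancl)
      qed
    next
      case False
      then show ?thesis using step(3) by blast
    qed
  qed
  then show ?thesis using b by blast
qed

lemma exit_unique:
  assumes blk: "is_block V E B F" and u: "exitv B u" and v: "exitv B v"
  shows "u = v"
proof (rule ccontr)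
  assume uv: "u \<noteq> v"
  obtain yu where yu: "yu \<in> V" "yu \<notin> B" "{u,yu} \<in> E" "(yu,r) \<in> (adj_rel (V - B) E)\<^sup>*"
    using u unfolding exitv_def by blast
  obtain yv where yv: "yv \<in> V" "yv \<notin> B" "{v,yv} \<in> E" "(yv,r) \<in> (adj_rel (V - B) E)\<^sup>*"
    using v unfolding exitv_def by blast
  have uB: "u \<in> B" "v \<in> B" using u v unfolding exitv_def by auto
  have vV: "v \<in> V" using blockV[OF blk] uB by blast
  have VB: "V - B \<subseteq> V - {u}" using uB by blast
  have w1: "(yu,r) \<in> (adj_rel (V - {u}) E)\<^sup>*" by (rule rt_adj_mono[OF yu(4) VB]) simp
  have w2: "(r,yv) \<in> (adj_rel (V - {u}) E)\<^sup>*" by (rule rt_adj_mono[OF rt_adj_sym[OF yv(4)] VB]) simp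
  have w3: "(yv,v) \<in> adj_rel (V - {u}) E" using yv uv uB vV by (auto simp: adj_in insert_commute)
  have "(yu,v) \<in> (adj_rel (V - {u}) E)\<^sup>*" using w1 w2 w3 by (meson rtrancl.rtrancl_into_rtrancl rtrancl_trans)
  then show False using ear_exist[OF blk uB(1) yu(2) yu(1) yu(3) _ uB(2)] by blast
qed

lemma par_prop:
  assumes blk: "is_block V E B F"
  shows "par B \<in> B" "r \<notin> B \<Longrightarrow> exitv B (par B)"
proof -
  have "r \<notin> B \<Longrightarrow> exitv B (par B)"
  proof -
    assume r: "r \<notin> B"
    obtain x where x: "exitv B x" using exit_exists[OF blk r] by blast
    have "exitv B (THE x. exitv B x)" by (rule theI[of "exitv B" x]) (use x exit_unique[OF blk] in blast)+
    then show "exitv B (par B)" using r unfolding par_def by simp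
  qed
  then show "r \<notin> B \<Longrightarrow> exitv B (par B)" by blast
  show "par B \<in> B"
  proof (cases "r \<in> B")
    case True then show ?thesis unfolding par_def by simp
  next
    case False then show ?thesis using \<open>r \<notin> B \<Longrightarrow> exitv B (par B)\<close> unfolding exitv_def by blast
  qed
qed

lemma par_r: "r \<in> B \<Longrightarrow> par B = r" unfolding par_def by simp

lemma D_disj:
  assumes b1: "is_block V E B F" and b2: "is_block V E C G" and ne: "(B,F) \<noteq> (C,G)"
  and x: "x \<in> B" "x \<in> C" "x \<noteq> par B" "x \<noteq> par C"
  shows False
proof -
  have BC: "z \<notin> C" if "z \<in> B" "z \<noteq> x" for z
    using block_union[OF b1 b2 x(1,2) that(1) _ that(2)[symmetric]] ne by auto
  have pB: "par B \<in> B" "par C \<in> C" using par_prop b1 b2 by auto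
  have ne1: "B - {x} \<noteq> {}" using pB x by auto
  have cB: "connected_graph (B - {x}) {e\<in>F. x \<notin> e}" by (rule nocut_conn[OF blockD(3)[OF b1] blockD(2)[OF b1] ne1])
  have "(x, par B) \<in> (adj_rel B F)\<^sup>*" using connD[OF blockD(2)[OF b1] x(1) pB(1)] .
  then obtain b where b: "(x,b) \<in> adj_rel B F" using x(3) by (metis converse_rtranclE)
  have FE: "F \<subseteq> E" using blockD(1)[OF b1] unfolding subgraph_def by blast
  have bB: "b \<in> B" "{x,b} \<in> E" using b FE by (auto simp: adj_in)
  have bx: "b \<noteq> x" using bB(2) no_loop by auto
  have bC: "b \<notin> C" using BC bB bx by blast
  have bV: "b \<in> V" using blockV[OF b1] bB by blast
  have w1: "(b, par B) \<in> (adj_rel (V - {x}) E)\<^sup>*"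
    by (rule rt_adj_mono[OF connD[OF cB]]) (use bB bx pB x blockV[OF b1] FE in auto)
  have w2: "(par B, r) \<in> (adj_rel (V - {x}) E)\<^sup>*"
  proof (cases "r \<in> B")
    case True then show ?thesis using par_r by simp
  next
    case False
    then obtain y where y: "y \<in> V" "y \<notin> B" "{par B, y} \<in> E" "(y,r) \<in> (adj_rel (V - B) E)\<^sup>*"
      using par_prop(2)[OF b1] unfolding exitv_def by blast
    have "(par B, y) \<in> adj_rel (V - {x}) E" using y pB x blockV[OF b1] by (auto simp: adj_in)
    moreover have "(y, r) \<in> (adj_rel (V - {x}) E)\<^sup>*" by (rule rt_adj_mono[OF y(4)]) (use x in auto)
    ultimately show ?thesis by (meson converse_rtrancl_into_rtrancl)
  qed
  have w3: "(r, par C) \<in> (adj_rel (V - {x}) E)\<^sup>*"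
  proof (cases "r \<in> C")
    case True then show ?thesis using par_r by simp
  next
    case False
    then obtain y where y: "y \<in> V" "y \<notin> C" "{par C, y} \<in> E" "(y,r) \<in> (adj_rel (V - C) E)\<^sup>*"
      using par_prop(2)[OF b2] unfolding exitv_def by blast
    have "(y, par C) \<in> adj_rel (V - {x}) E" using y pB x blockV[OF b2] by (auto simp: adj_in insert_commute)
    moreover have "(r, y) \<in> (adj_rel (V - {x}) E)\<^sup>*" by (rule rt_adj_mono[OF rt_adj_sym[OF y(4)]]) (use x in auto)
    ultimately show ?thesis by (meson rtrancl.rtrancl_into_rtrancl)
  qed
  have "(b, par C) \<in> (adj_rel (V - {x}) E)\<^sup>*" using w1 w2 w3 by (meson rtrancl_trans)
  then show False using ear_exist[OF b2 x(2) bC bV bB(2) _ pB(2)] by blast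
qed

definition Dp :: "'a set \<times> 'a set set \<Rightarrow> 'a set" where
  "Dp \<beta> = fst \<beta> - {par (fst \<beta>)}"

lemma Dp_disj:
  assumes "is_block V E B F" "is_block V E C G" "x \<in> Dp (B,F)" "x \<in> Dp (C,G)"
  shows "(B,F) = (C,G)"
  using D_disj[OF assms(1,2)] assms(3,4) unfolding Dp_def by auto

lemma key_claim:
  assumes res: "resolving V E W" and blk: "is_block V E B F"
  and nW: "Dp (B,F) \<inter> W = {}"
  and nA: "\<forall>x\<in>Dp (B,F). \<not> (\<forall>w\<in>W. kappa V E x w = 1)"
  shows "\<exists>C G. is_block V E C G \<and> Dp (C,G) \<inter> W \<noteq> {} \<and> par C \<in> Dp (B,F)"
proof (rule ccontr)
  assume H: "\<not> ?thesis"
  define pB where "pB = par B"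
  have WV: "W \<subseteq> V" using res unfolding resolving_def by auto
  have rs: "\<And>v1 v2. v1 \<in> V \<Longrightarrow> v2 \<in> V \<Longrightarrow> (\<forall>w\<in>W. kappa V E v1 w = kappa V E v2 w) \<Longrightarrow> v1 = v2"
    using res unfolding resolving_def by blast
  have pB: "pB \<in> B" unfolding pB_def using par_prop(1)[OF blk] .
  have D: "Dp (B,F) = B - {pB}" unfolding Dp_def pB_def by simp
  have cB: "card B \<ge> 2" by (rule block_card2[OF blk])
  have fB: "finite B" by (rule finB[OF blk])
  have BV: "B \<subseteq> V" by (rule blockV[OF blk])
  have one: "kappa V E x w = 1" if x: "x \<in> B - {pB}" and w: "w \<in> W" "w \<noteq> pB" for x w
  proof (rule ccontr)
    assume k: "kappa V E x w \<noteq> 1"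
    have xw: "x \<noteq> w" using x w nW D by auto
    obtain C G where C: "is_block V E C G" "x \<in> C" "w \<in> C"
      using kappa_not1[OF xw _ _ k] x w BV WV by blast
    show False
    proof (cases "(C,G) = (B,F)")
      case True
      then show False using C(3) w nW D by auto
    next
      case False
      have "x = par C"
        using D_disj[OF blk C(1) False[symmetric]] x C(2) unfolding pB_def by auto
      then have "par C \<in> Dp (B,F)" using x D by simp
      moreover have "w \<in> Dp (C,G)" using C(3) w(1) xw \<open>x = par C\<close> unfolding Dp_def by auto
      ultimately show False using H C(1) w(1) by blast
    qed
  qed
  have "card (B - {pB}) = card B - 1" using fB pB by simp
  then have "card (B - {pB}) \<noteq> 0" using cB by linarith
  then have "B - {pB} \<noteq> {}" by (metis card.empty)
  then obtain x0 where x0: "x0 \<in> B - {pB}" by blast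
  show False
  proof (cases "pB \<in> W")
    case False
    have "\<forall>w\<in>W. kappa V E x0 w = 1" using one[OF x0] False by blast
    then show False using nA x0 D by blast
  next
    case True
    define f where "f x = kappa V E x pB" for x
    have fr: "f x \<in> enat ` {2..card B - 1}" if x: "x \<in> B - {pB}" for x
    proof -
      have xp: "x \<noteq> pB" using x by simp
      obtain n where n: "f x = enat n" using kappa_cases[OF xp] unfolding f_def by blast
      have "f x \<le> enat (card B - 1)" unfolding f_def by (rule kappa_block_le[OF blk _ pB xp]) (use x in simp)
      then have n1: "n \<le> card B - 1" using n by simp
      have "f x \<ge> 1" unfolding f_def by (rule kappa_ge1[OF xp]) (use x pB BV in auto)
      then have n2: "n \<ge> 1" using n by (simp add: one_enat_def)
      have "f x \<noteq> 1"
      proof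
        assume "f x = 1"
        then have "\<forall>w\<in>W. kappa V E x w = 1" using one[OF x] unfolding f_def by metis
        then show False using nA x D by blast
      qed
      then have "n \<noteq> 1" using n by (simp add: one_enat_def)
      then show ?thesis using n n1 n2 by auto
    qed
    have inj: "inj_on f (B - {pB})"
    proof
      fix x x' assume xx: "x \<in> B - {pB}" "x' \<in> B - {pB}" "f x = f x'"
      have "\<forall>w\<in>W. kappa V E x w = kappa V E x' w"
      proof
        fix w assume "w \<in> W"
        show "kappa V E x w = kappa V E x' w"
        proof (cases "w = pB")
          case True then show ?thesis using xx(3) unfolding f_def by simp
        next
          case False then show ?thesis using one[OF xx(1) \<open>w \<in> W\<close>] one[OF xx(2) \<open>w \<in> W\<close>] by simp
        qed
      qed
      then show "x = x'" using rs xx BV by blast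
    qed
    have "card (B - {pB}) \<le> card (enat ` {2..card B - 1})"
      by (rule card_inj_on_le[OF inj]) (use fr in auto)
    also have "\<dots> \<le> card {2..card B - 1}" by (rule card_image_le) simp
    finally have "card B - 1 \<le> card B - 2" using pB fB by simp
    then show False using cB by linarith
  qed
qed

lemma main_bound:
  assumes res: "resolving V E W" and rW: "r \<in> W"
  shows "num_blocks V E + 1 \<le> 2 * card W"
proof -
  define Bl where "Bl = {(B,F). is_block V E B F}"
  have WV: "W \<subseteq> V" using res unfolding resolving_def by auto
  have fW: "finite W" using WV finV by (rule finite_subset)
  have rs: "\<And>v1 v2. v1 \<in> V \<Longrightarrow> v2 \<in> V \<Longrightarrow> (\<forall>w\<in>W. kappa V E v1 w = kappa V E v2 w) \<Longrightarrow> v1 = v2"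
    using res unfolding resolving_def by blast
  have finBl: "finite Bl"
    by (rule finite_subset[of _ "Pow V \<times> Pow E"]) (auto simp: Bl_def finV finE dest!: blockD(1) simp: subgraph_def)
  have bl: "is_block V E (fst \<beta>) (snd \<beta>)" if "\<beta> \<in> Bl" for \<beta> using that unfolding Bl_def by auto
  have dj: "\<beta>1 = \<beta>2" if "\<beta>1 \<in> Bl" "\<beta>2 \<in> Bl" "x \<in> Dp \<beta>1" "x \<in> Dp \<beta>2" for \<beta>1 \<beta>2 x
    using Dp_disj[OF bl[OF that(1)] bl[OF that(2)]] that(3,4) by simp
  define A where "A = {x \<in> V - W. \<forall>w\<in>W. kappa V E x w = 1}"
  define Good where "Good = {\<beta>\<in>Bl. Dp \<beta> \<inter> W \<noteq> {}}"
  define Bad1 where "Bad1 = {\<beta>\<in>Bl - Good. Dp \<beta> \<inter> A \<noteq> {}}"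
  define Bad2 where "Bad2 = Bl - Good - Bad1"
  have rD: "r \<notin> Dp \<beta>" for \<beta> unfolding Dp_def using par_r by (cases "r \<in> fst \<beta>") auto
  define g where "g \<beta> = (SOME w. w \<in> Dp \<beta> \<inter> W)" for \<beta>
  have gG: "g \<beta> \<in> Dp \<beta> \<inter> W" if "\<beta> \<in> Good" for \<beta>
    using that unfolding g_def some_in_eq Good_def by auto
  have c1: "card Good \<le> card (W - {r})"
  proof (rule card_inj_on_le)
    show "inj_on g Good"
    proof (rule inj_onI)
      fix b1 b2 assume b: "b1 \<in> Good" "b2 \<in> Good" "g b1 = g b2"
      have "g b1 \<in> Dp b1" "g b1 \<in> Dp b2" using gG[OF b(1)] gG[OF b(2)] b(3) by auto
      moreover have "b1 \<in> Bl" "b2 \<in> Bl" using b unfolding Good_def by auto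
      ultimately show "b1 = b2" using dj by blast
    qed
    show "g ` Good \<subseteq> W - {r}" using gG rD by blast
    show "finite (W - {r})" using fW by simp
  qed
  have c2: "card Bad1 \<le> 1"
  proof -
    have "\<beta>1 = \<beta>2" if "\<beta>1 \<in> Bad1" "\<beta>2 \<in> Bad1" for \<beta>1 \<beta>2
    proof -
      have "Dp \<beta>1 \<inter> A \<noteq> {}" "Dp \<beta>2 \<inter> A \<noteq> {}" using that unfolding Bad1_def by auto
      then obtain a1 a2 where a: "a1 \<in> Dp \<beta>1" "a1 \<in> A" "a2 \<in> Dp \<beta>2" "a2 \<in> A" by blast
      have "a1 = a2" using a rs unfolding A_def by auto
      then show ?thesis using dj that a unfolding Bad1_def by blast
    qed
    moreover have "finite Bad1" using finBl unfolding Bad1_def by simp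
    ultimately show ?thesis by (simp add: card_le_Suc0_iff_eq)
  qed
  have key: "\<exists>\<gamma>\<in>Good. par (fst \<gamma>) \<in> Dp \<beta>" if "\<beta> \<in> Bad2" for \<beta>
  proof -
    obtain B F where bF: "\<beta> = (B,F)" by fastforce
    have blk: "is_block V E B F" using that bF unfolding Bad2_def Bl_def by auto
    have nW: "Dp (B,F) \<inter> W = {}" using that bF unfolding Bad2_def Good_def by auto
    have nA: "\<forall>x\<in>Dp (B,F). \<not> (\<forall>w\<in>W. kappa V E x w = 1)"
    proof (intro ballI notI)
      fix x assume x: "x \<in> Dp (B,F)" "\<forall>w\<in>W. kappa V E x w = 1"
      have "x \<in> V" using x blockV[OF blk] unfolding Dp_def by auto
      then have "x \<in> A" using x nW unfolding A_def by auto
      then show False using that bF x(1) unfolding Bad2_def Bad1_def by auto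
    qed
    obtain C G where "is_block V E C G" "Dp (C,G) \<inter> W \<noteq> {}" "par C \<in> Dp (B,F)"
      using key_claim[OF res blk nW nA] by blast
    then show ?thesis using bF unfolding Good_def Bl_def by (intro bexI[of _ "(C,G)"]) auto
  qed
  define h where "h \<beta> = (SOME \<gamma>. \<gamma> \<in> Good \<and> par (fst \<gamma>) \<in> Dp \<beta>)" for \<beta>
  have hG: "h \<beta> \<in> Good \<and> par (fst (h \<beta>)) \<in> Dp \<beta>" if bb: "\<beta> \<in> Bad2" for \<beta>
  proof -
    obtain \<gamma> where "\<gamma> \<in> Good \<and> par (fst \<gamma>) \<in> Dp \<beta>" using key[OF bb] by blast
    then show ?thesis unfolding h_def by (rule someI)
  qed
  have c3: "card Bad2 \<le> card Good"
  proof (rule card_inj_on_le)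
    show "inj_on h Bad2"
    proof (rule inj_onI)
      fix b1 b2 assume "b1 \<in> Bad2" "b2 \<in> Bad2" "h b1 = h b2"
      then show "b1 = b2" using hG dj unfolding Bad2_def by (metis Diff_iff)
    qed
    show "h ` Bad2 \<subseteq> Good" using hG by blast
    show "finite Good" using finBl unfolding Good_def by simp
  qed
  have "Bl = Good \<union> (Bad1 \<union> Bad2)" "Good \<inter> (Bad1 \<union> Bad2) = {}"
    unfolding Bad1_def Bad2_def Good_def by auto
  then have "card Bl = card Good + card (Bad1 \<union> Bad2)"
    using finBl by (metis card_Un_disjoint finite_Un)
  also have "\<dots> \<le> card Good + card Bad1 + card Bad2" using card_Un_le[of Bad1 Bad2] by simp
  finally have "card Bl \<le> 2 * card (W - {r}) + 1" using c1 c2 c3 by linarith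
  moreover have "card (W - {r}) = card W - 1" using rW fW by simp
  moreover have "card W \<ge> 1" using rW fW by (metis One_nat_def Suc_leI card_gt_0_iff empty_iff)
  moreover have "num_blocks V E = card Bl" unfolding num_blocks_def Bl_def by simp
  ultimately show ?thesis by linarith
qed

end

theorem mainTheorem13:
  assumes "simple_graph V E" and "connected_graph V E" and "card V \<ge> 2"
  shows "real (cdim V E) \<ge> (real (num_blocks V E) + 1) / 2"
proof -
  interpret Gr V E using assms by unfold_locales
  obtain u v where uv: "u \<in> V" "v \<in> V" "u \<noteq> v" using assms(3) finV
    by (metis card_le_Suc0_iff_eq not_less_eq_eq numeral_2_eq_2)
  have bound: "num_blocks V E + 1 \<le> 2 * card W" if res: "resolving V E W" for W
  proof -
    have WV: "W \<subseteq> V" using res unfolding resolving_def by auto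
    have "W \<noteq> {}"
    proof
      assume "W = {}"
      then have "u = v" using res uv unfolding resolving_def by auto
      then show False using uv by simp
    qed
    then obtain r where r: "r \<in> W" by blast
    interpret Grr V E r by unfold_locales (use WV r in auto)
    show ?thesis by (rule main_bound[OF res r])
  qed
  have Vres: "resolving V E V"
    unfolding resolving_def
  proof (intro conjI ballI impI)
    fix v1 v2 assume v: "v1 \<in> V" "v2 \<in> V" "\<forall>w\<in>V. kappa V E v1 w = kappa V E v2 w"
    then have "kappa V E v2 v1 = kappa V E v1 v1" by auto
    then show "v1 = v2" unfolding kappa_def by (auto split: if_splits)
  qed simp
  define S where "S = {card W | W. resolving V E W}"
  have finS: "finite S"
  proof (rule finite_subset[of _ "{..card V}"])
    show "S \<subseteq> {..card V}"
      unfolding S_def resolving_def using finV by (auto intro: card_mono)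
  qed simp
  have "card V \<in> S" using Vres unfolding S_def by auto
  then have "Min S \<in> S" using finS by (intro Min_in) auto
  then obtain W0 where W0: "resolving V E W0" "cdim V E = card W0"
    unfolding S_def cdim_def by auto
  have "num_blocks V E + 1 \<le> 2 * cdim V E" using bound[OF W0(1)] W0(2) by simp
  then have "real (num_blocks V E + 1) \<le> real (2 * cdim V E)" by (simp only: of_nat_le_iff)
  then show ?thesis by simp
qed

end
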